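(* Consider the distributed quantized weight-balancing algorithm described in the context on a strongly connected digraph, with step-size $\gamma(k)=2^{-n}$ for $2^n-1\le k\le 2^{n+1}-2$. Let $\mathcal{V}^+(k)=\{i\in\mathcal{V}:b_i(k)\ge0\}$ and $\mathcal{V}^{--}(k)=\{i\in\mathcal{V}:b_i(k)<0\}$. If the decreasing event $\mathcal{D}_k$ does not occur, then $\mathcal{V}^+(k+1)=\mathcal{V}^+(k)$ and $\mathcal{V}^{--}(k+1)=\mathcal{V}^{--}(k)$.
   Context: $\mathcal{G}=(\mathcal{V},\mathcal{E})$, $\mathcal{V}=\{1,\dots,N\}$, no self-loops; $\mathcal{N}_i^-=\{j:(j,i)\in\mathcal{E}\}$, $\mathcal{N}_i^+=\{j:(i,j)\in\mathcal{E}\}$, $d_i^+=|\mathcal{N}_i^+|$. Algorithm: $a_{ij}(0)=1$ if $j\in\mathcal{N}_i^-$ and $0$ otherwise; $b_i(k)=\sum_{j\in\mathcal{N}_i^-}a_{ij}(k)-\sum_{j\in\mathcal{N}_i^+}a_{ji}(k)$; $n_i(k)=1$ if $b_i(k)\ge d_i^+\gamma(k)$, else $0$; $a_{ij}(k+1)=a_{ij}(k)+n_j(k)\gamma(k)$ for $j\in\mathcal{N}_i^-$. The decreasing event $\mathcal{D}_k$: there exist $i\in\mathcal{V}$ and $j\in\mathcal{N}_i^+$ with $n_i(k)>0$ and $b_j(k)<0$. *)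

theory Defs
  imports Complex_Main
begin

definition in_nbrs :: "(nat \<times> nat) set \<Rightarrow> nat \<Rightarrow> nat set" where
  "in_nbrs E i = {j. (j, i) \<in> E}"

definition out_nbrs :: "(nat \<times> nat) set \<Rightarrow> nat \<Rightarrow> nat set" where
  "out_nbrs E i = {j. (i, j) \<in> E}"

definition out_deg :: "(nat \<times> nat) set \<Rightarrow> nat \<Rightarrow> nat" where
  "out_deg E i = card (out_nbrs E i)"

text \<open>Weights are stored as a i j = a_{ij}, the weight of edge (j,i).\<close>

definition imbalance :: "(nat \<times> nat) set \<Rightarrow> (nat \<Rightarrow> nat \<Rightarrow> real) \<Rightarrow> nat \<Rightarrow> real" where
  "imbalance E a i = (\<Sum>j\<in>in_nbrs E i. a i j) - (\<Sum>j\<in>out_nbrs E i. a j i)"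

definition nflag :: "(nat \<times> nat) set \<Rightarrow> real \<Rightarrow> (nat \<Rightarrow> nat \<Rightarrow> real) \<Rightarrow> nat \<Rightarrow> real" where
  "nflag E g a i = (if imbalance E a i \<ge> real (out_deg E i) * g then 1 else 0)"

primrec wts :: "(nat \<times> nat) set \<Rightarrow> (nat \<Rightarrow> real) \<Rightarrow> nat \<Rightarrow> nat \<Rightarrow> nat \<Rightarrow> real" where
  "wts E gamma 0 = (\<lambda>i j. if (j, i) \<in> E then 1 else 0)"
| "wts E gamma (Suc k) = (\<lambda>i j. if (j, i) \<in> E
      then wts E gamma k i j + nflag E (gamma k) (wts E gamma k) j * gamma k else 0)"

definition b_at :: "(nat \<times> nat) set \<Rightarrow> (nat \<Rightarrow> real) \<Rightarrow> nat \<Rightarrow> nat \<Rightarrow> real" where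
  "b_at E gamma k i = imbalance E (wts E gamma k) i"

definition n_at :: "(nat \<times> nat) set \<Rightarrow> (nat \<Rightarrow> real) \<Rightarrow> nat \<Rightarrow> nat \<Rightarrow> real" where
  "n_at E gamma k i = nflag E (gamma k) (wts E gamma k) i"

definition decreasing_event :: "nat \<Rightarrow> (nat \<times> nat) set \<Rightarrow> (nat \<Rightarrow> real) \<Rightarrow> nat \<Rightarrow> bool" where
  "decreasing_event N E gamma k \<longleftrightarrow>
     (\<exists>i\<in>{1..N}. \<exists>j\<in>out_nbrs E i. n_at E gamma k i > 0 \<and> b_at E gamma k j < 0)"

end

theory Submission
  imports Defs
begin

lemma exists_n: "\<exists>n. 2 ^ n - 1 \<le> (k::nat) \<and> k \<le> 2 ^ (n + 1) - 2"
proof (induction k)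
  case 0
  show ?case by (rule exI[of _ 0]) simp
next
  case (Suc k)
  then obtain n where n: "2 ^ n - 1 \<le> k" "k \<le> 2 ^ (n + 1) - 2" by blast
  have p: "(2::nat) ^ n \<ge> 1" by simp
  show ?case
  proof (cases "Suc k \<le> 2 ^ (n + 1) - 2")
    case True
    then show ?thesis using n by (intro exI[of _ n]) simp
  next
    case False
    then have "k = 2 ^ (n + 1) - 2" using n by simp
    have e1: "(2::nat) ^ (Suc n + 1) = 4 * 2 ^ n" "(2::nat) ^ Suc n = 2 * 2 ^ n" "(2::nat) ^ (n + 1) = 2 * 2 ^ n" by simp_all
    have "2 ^ Suc n - 1 \<le> Suc k \<and> Suc k \<le> 2 ^ (Suc n + 1) - 2"
      unfolding e1 using p \<open>k = 2 ^ (n + 1) - 2\<close> unfolding e1 by linarith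
    then show ?thesis by blast
  qed
qed

theorem lemma2:
  fixes N :: nat and E :: "(nat \<times> nat) set" and gamma :: "nat \<Rightarrow> real" and k :: nat
  assumes edges: "E \<subseteq> {1..N} \<times> {1..N}"
    and no_loops: "\<forall>i. (i, i) \<notin> E"
    and strongly_connected: "\<forall>i\<in>{1..N}. \<forall>j\<in>{1..N}. (i, j) \<in> E\<^sup>*"
    and step: "\<And>n k. 2 ^ n - 1 \<le> k \<Longrightarrow> k \<le> 2 ^ (n + 1) - 2 \<Longrightarrow> gamma k = 1 / 2 ^ n"
    and no_event: "\<not> decreasing_event N E gamma k"
  shows "{i\<in>{1..N}. b_at E gamma (Suc k) i \<ge> 0} = {i\<in>{1..N}. b_at E gamma k i \<ge> 0}
       \<and> {i\<in>{1..N}. b_at E gamma (Suc k) i < 0} = {i\<in>{1..N}. b_at E gamma k i < 0}"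
proof -
  define g where "g = gamma k"
  define n where "n = n_at E gamma k"
  have g0: "g \<ge> 0"
  proof -
    obtain m where "2 ^ m - 1 \<le> k" "k \<le> 2 ^ (m + 1) - 2" using exists_n by blast
    then show ?thesis unfolding g_def using step by simp
  qed
  have finE: "finite E" using edges finite_subset by blast
  have finin: "finite (in_nbrs E i)" for i
  proof -
    have "in_nbrs E i \<subseteq> fst ` E" unfolding in_nbrs_def by force
    then show ?thesis using finE finite_subset by blast
  qed
  have finout: "finite (out_nbrs E i)" for i
  proof -
    have "out_nbrs E i \<subseteq> snd ` E" unfolding out_nbrs_def by force
    then show ?thesis using finE finite_subset by blast
  qed
  have ident: "b_at E gamma (Suc k) i = b_at E gamma k i + (\<Sum>j\<in>in_nbrs E i. n j * g)
      - real (out_deg E i) * (n i * g)" for i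
  proof -
    have s1: "(\<Sum>j\<in>in_nbrs E i. wts E gamma (Suc k) i j)
        = (\<Sum>j\<in>in_nbrs E i. wts E gamma k i j + n j * g)"
      by (rule sum.cong) (auto simp: in_nbrs_def n_def n_at_def g_def)
    have s2: "(\<Sum>j\<in>out_nbrs E i. wts E gamma (Suc k) j i)
        = (\<Sum>j\<in>out_nbrs E i. wts E gamma k j i + n i * g)"
      by (rule sum.cong) (auto simp: out_nbrs_def n_def n_at_def g_def)
    show ?thesis unfolding b_at_def imbalance_def s1 s2 sum.distrib out_deg_def
      by simp
  qed
  have key: "b_at E gamma (Suc k) i \<ge> 0 \<longleftrightarrow> b_at E gamma k i \<ge> 0" if i: "i \<in> {1..N}" for i
  proof (cases "b_at E gamma k i \<ge> 0")
    case True
    have "(\<Sum>j\<in>in_nbrs E i. n j * g) \<ge> 0"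
      by (rule sum_nonneg) (simp add: n_def n_at_def nflag_def g0)
    moreover have "real (out_deg E i) * (n i * g) \<le> b_at E gamma k i"
    proof (cases "n i = 1")
      case True
      then have "b_at E gamma k i \<ge> real (out_deg E i) * g"
        by (simp add: n_def n_at_def nflag_def b_at_def g_def split: if_splits)
      then show ?thesis using True by simp
    next
      case False
      then have "n i = 0" by (simp add: n_def n_at_def nflag_def split: if_splits)
      then show ?thesis using \<open>b_at E gamma k i \<ge> 0\<close> by simp
    qed
    ultimately show ?thesis using ident[of i] True by linarith
  next
    case False
    have ni: "n i = 0"
    proof -
      have "real (out_deg E i) * g \<ge> 0" using g0 by simp
      then show ?thesis using False
        by (simp add: n_def n_at_def nflag_def b_at_def g_def)
    qed
    have "n j = 0" if j: "j \<in> in_nbrs E i" for j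
    proof (rule ccontr)
      assume "n j \<noteq> 0"
      then have "n j > 0" by (simp add: n_def n_at_def nflag_def split: if_splits)
      moreover have "j \<in> {1..N}" using j edges unfolding in_nbrs_def by auto
      moreover have "i \<in> out_nbrs E j" using j unfolding in_nbrs_def out_nbrs_def by simp
      ultimately show False using no_event False
        unfolding decreasing_event_def n_def by force
    qed
    then have "(\<Sum>j\<in>in_nbrs E i. n j * g) = 0" by simp
    then show ?thesis using ident[of i] ni False by simp
  qed
  show ?thesis using key by (auto simp: not_le[symmetric])
qed

end
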